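(* Let $\boldsymbol\theta^*\in\mathbb{R}^d$ and consider two runs $(\mathbf a^{\langle t\rangle}_{(1)},\mathbf b^{\langle t\rangle}_{(1)})$ and $(\mathbf a^{\langle t\rangle}_{(2)},\mathbf b^{\langle t\rangle}_{(2)})$ of the iteration in the context, from initial points $(\mathbf a^{\langle 0\rangle}_{(1)},\mathbf b^{\langle 0\rangle}_{(1)})$ and $(\mathbf a^{\langle 0\rangle}_{(2)},\mathbf b^{\langle 0\rangle}_{(2)})$. (i) If $\mathbf a^{\langle 0\rangle}_{(1)}=-\mathbf a^{\langle 0\rangle}_{(2)}$ and $\mathbf b^{\langle 0\rangle}_{(1)}=\mathbf b^{\langle 0\rangle}_{(2)}$, then $\mathbf a^{\langle t\rangle}_{(1)}=-\mathbf a^{\langle t\rangle}_{(2)}$ and $\mathbf b^{\langle t\rangle}_{(1)}=\mathbf b^{\langle t\rangle}_{(2)}$ for all $t\ge0$. (ii) If $\mathbf b^{\langle 0\rangle}_{(1)}=-\mathbf b^{\langle 0\rangle}_{(2)}$ and $\mathbf a^{\langle 0\rangle}_{(1)}=\mathbf a^{\langle 0\rangle}_{(2)}$, then $\mathbf a^{\langle t\rangle}_{(1)}=\mathbf a^{\langle t\rangle}_{(2)}$ and $\mathbf b^{\langle t\rangle}_{(1)}=-\mathbf b^{\langle t\rangle}_{(2)}$ for all $t\ge0$.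
   Context: $\mathbf Y\sim\tfrac12N(-\boldsymbol\theta^*,I_d)+\tfrac12N(\boldsymbol\theta^*,I_d)$; $w_d(\mathbf y,\boldsymbol\theta)=\frac{e^{\langle\mathbf y,\boldsymbol\theta\rangle}}{e^{\langle\mathbf y,\boldsymbol\theta\rangle}+e^{-\langle\mathbf y,\boldsymbol\theta\rangle}}$. Given $\mathbf a^{\langle0\rangle},\mathbf b^{\langle0\rangle}\in\mathbb{R}^d$, for $t\ge0$: $\mathbf q^{\langle t+1\rangle}=\mathbb{E}[w_d(\mathbf Y-\mathbf a^{\langle t\rangle},\mathbf b^{\langle t\rangle})\mathbf Y]$, $p^{\langle t+1\rangle}=\mathbb{E}[w_d(\mathbf Y-\mathbf a^{\langle t\rangle},\mathbf b^{\langle t\rangle})]$, $\mathbf a^{\langle t+1\rangle}=\frac{\mathbf q^{\langle t+1\rangle}(1-2p^{\langle t+1\rangle})}{2p^{\langle t+1\rangle}(1-p^{\langle t+1\rangle})}$, $\mathbf b^{\langle t+1\rangle}=\frac{\mathbf q^{\langle t+1\rangle}}{2p^{\langle t+1\rangle}(1-p^{\langle t+1\rangle})}$. *)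

theory Defs
  imports "HOL-Analysis.Analysis"
begin

definition gauss_density :: "'a::euclidean_space \<Rightarrow> 'a \<Rightarrow> real" where
  "gauss_density mu y = (2 * pi) powr (- real DIM('a) / 2) * exp (- (norm (y - mu))\<^sup>2 / 2)"

definition mix_measure :: "'a::euclidean_space \<Rightarrow> 'a measure" where
  "mix_measure theta = density lborel
     (\<lambda>y. ennreal (1/2 * gauss_density (- theta) y + 1/2 * gauss_density theta y))"

definition wd :: "'a::euclidean_space \<Rightarrow> 'a \<Rightarrow> real" where
  "wd y theta = exp (inner y theta) / (exp (inner y theta) + exp (- inner y theta))"

definition em_step :: "'a::euclidean_space \<Rightarrow> 'a \<times> 'a \<Rightarrow> 'a \<times> 'a" where
  "em_step theta ab =
     (let a = fst ab; b = snd ab;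
          q = (\<integral>y. wd (y - a) b *\<^sub>R y \<partial>mix_measure theta);
          p = (\<integral>y. wd (y - a) b \<partial>mix_measure theta)
      in (((1 - 2 * p) / (2 * p * (1 - p))) *\<^sub>R q, (1 / (2 * p * (1 - p))) *\<^sub>R q))"

definition em_iter :: "'a::euclidean_space \<Rightarrow> 'a \<Rightarrow> 'a \<Rightarrow> nat \<Rightarrow> 'a \<times> 'a" where
  "em_iter theta a0 b0 t = (em_step theta ^^ t) (a0, b0)"

end

theory Submission
  imports Defs "HOL-Probability.Probability"
begin

lemma wd_neg1: "wd (-z) b = 1 - wd z b"
proof -
  have "exp (inner z b) + exp (- inner z b) > 0" by (simp add: add_pos_pos)
  then show ?thesis unfolding wd_def by (simp add: field_simps)
qed

lemma wd_neg2: "wd z (-b) = 1 - wd z b"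
proof -
  have "exp (inner z b) + exp (- inner z b) > 0" by (simp add: add_pos_pos)
  then show ?thesis unfolding wd_def by (simp add: field_simps)
qed

lemma gauss_meas[measurable]: "gauss_density mu \<in> borel_measurable borel"
  unfolding gauss_density_def by measurable

lemma wd_meas[measurable]: "(\<lambda>y. wd (y - a) b) \<in> borel_measurable borel"
  unfolding wd_def by measurable

lemma gauss_sym: "gauss_density (-mu) (-y) = gauss_density mu y"
  unfolding gauss_density_def by (simp add: norm_minus_commute)

definition mixd :: "'a::euclidean_space \<Rightarrow> 'a \<Rightarrow> real" where
  "mixd theta y = 1/2 * gauss_density (- theta) y + 1/2 * gauss_density theta y"

lemma mixd_sym: "mixd theta (-y) = mixd theta y"
  unfolding mixd_def using gauss_sym[of theta y] gauss_sym[of "-theta" y] by simp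

lemma mixd_meas[measurable]: "mixd theta \<in> borel_measurable borel"
  unfolding mixd_def by measurable

lemma gauss_nonneg: "0 \<le> gauss_density mu y"
  unfolding gauss_density_def by simp

lemma mixd_nonneg: "0 \<le> mixd theta y"
  unfolding mixd_def using gauss_nonneg[of "-theta" y] gauss_nonneg[of theta y] by simp

lemma mix_eq: "mix_measure theta = density lborel (\<lambda>y. ennreal (mixd theta y))"
  unfolding mix_measure_def mixd_def ..

lemma lborel_uminus: "distr lborel borel uminus = (lborel :: 'a::euclidean_space measure)"
  using lborel_affine[of "-1::real" "0::'a"] by (simp add: density_1)

lemma integral_lborel_uminus:
  fixes f :: "'a::euclidean_space \<Rightarrow> 'b::{banach, second_countable_topology}"
  assumes [measurable]: "f \<in> borel_measurable borel"
  shows "(\<integral>y. f (-y) \<partial>lborel) = (\<integral>y. f y \<partial>lborel)"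
proof -
  have "(\<integral>y. f y \<partial>lborel) = (\<integral>y. f y \<partial>distr lborel borel uminus)"
    by (simp add: lborel_uminus)
  also have "\<dots> = (\<integral>y. f (-y) \<partial>lborel)"
    by (rule integral_distr) auto
  finally show ?thesis by simp
qed

lemma mix_sym:
  fixes f :: "'a::euclidean_space \<Rightarrow> 'b::{banach, second_countable_topology}"
  assumes [measurable]: "f \<in> borel_measurable borel"
  shows "(\<integral>y. f (-y) \<partial>mix_measure theta) = (\<integral>y. f y \<partial>mix_measure theta)"
proof -
  have "(\<integral>y. f (-y) \<partial>mix_measure theta) = (\<integral>y. mixd theta y *\<^sub>R f (-y) \<partial>lborel)"
    unfolding mix_eq by (rule integral_density) (auto simp: mixd_nonneg)
  also have "\<dots> = (\<integral>y. mixd theta (-y) *\<^sub>R f (-y) \<partial>lborel)"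
    by (simp add: mixd_sym)
  also have "\<dots> = (\<integral>y. mixd theta y *\<^sub>R f y \<partial>lborel)"
    by (rule integral_lborel_uminus) measurable
  also have "\<dots> = (\<integral>y. f y \<partial>mix_measure theta)"
    unfolding mix_eq by (rule integral_density[symmetric]) (auto simp: mixd_nonneg)
  finally show ?thesis .
qed

lemma gauss_prod:
  fixes mu y :: "'a::euclidean_space"
  shows "gauss_density mu y = (\<Prod>b\<in>Basis. normal_density (mu \<bullet> b) 1 (y \<bullet> b))"
proof -
  have n: "(norm (y - mu))\<^sup>2 = (\<Sum>b\<in>Basis. (y \<bullet> b - mu \<bullet> b)\<^sup>2)"
    unfolding power2_norm_eq_inner by (subst euclidean_inner) (simp add: inner_diff_left power2_eq_square)
  have c: "(2 * pi) powr (- real DIM('a) / 2) = (1 / sqrt (2*pi)) ^ DIM('a)"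
  proof -
    have "(1 / sqrt (2*pi)) ^ DIM('a) = ((2*pi) powr (-1/2)) ^ DIM('a)"
      by (simp add: powr_minus_divide powr_half_sqrt)
    also have "\<dots> = (2 * pi) powr (- real DIM('a) / 2)"
      by (simp add: powr_realpow[symmetric] powr_powr)
    finally show ?thesis ..
  qed
  have "(\<Prod>b\<in>Basis. normal_density (mu \<bullet> b) 1 (y \<bullet> b))
      = (\<Prod>b\<in>Basis. (1 / sqrt (2*pi)) * exp (- (y \<bullet> b - mu \<bullet> b)\<^sup>2 / 2))"
    unfolding normal_density_def by simp
  also have "\<dots> = (1 / sqrt (2*pi)) ^ DIM('a) * exp (\<Sum>b\<in>Basis. - (y \<bullet> b - mu \<bullet> b)\<^sup>2 / 2)"
    by (simp only: prod.distrib prod_constant exp_sum[OF finite_Basis])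
  also have "(\<Sum>b\<in>Basis. - (y \<bullet> b - mu \<bullet> b)\<^sup>2 / 2) = - (norm (y - mu))\<^sup>2 / 2"
    unfolding n by (simp add: sum_negf sum_divide_distrib)
  finally show ?thesis unfolding gauss_density_def c by simp
qed

lemma nn_normal: "(\<integral>\<^sup>+x. ennreal (normal_density m 1 x) \<partial>lborel) = 1"
  apply (subst nn_integral_eq_integral)
  apply (auto intro: integrable_normal_density)
  done

lemma nn_normal_abs: "(\<integral>\<^sup>+x. ennreal (normal_density m 1 x * \<bar>x\<bar>) \<partial>lborel) < \<infinity>"
proof -
  have "integrable lborel (\<lambda>x. normal_density m 1 x * x)" by (rule integrable_normal_moment_nz_1) simp
  then have "(\<integral>\<^sup>+x. ennreal (norm (normal_density m 1 x * x)) \<partial>lborel) < \<infinity>"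
    by (simp add: integrable_iff_bounded)
  then show ?thesis by (simp add: abs_mult)
qed

lemma nn_gauss: "(\<integral>\<^sup>+y. ennreal (gauss_density mu y) \<partial>lborel) = 1"
proof -
  have "(\<integral>\<^sup>+y. ennreal (gauss_density mu y) \<partial>lborel)
      = (\<integral>\<^sup>+y. (\<Prod>b\<in>Basis. ennreal (normal_density (mu \<bullet> b) 1 (y \<bullet> b))) \<partial>lborel)"
    by (simp add: gauss_prod prod_ennreal)
  also have "\<dots> = (\<Prod>b\<in>Basis. (\<integral>\<^sup>+x. ennreal (normal_density (mu \<bullet> b) 1 x) \<partial>lborel))"
    by (rule nn_integral_lborel_prod[where f="\<lambda>b x. ennreal (normal_density (mu \<bullet> b) 1 x)"]) auto
  also have "\<dots> = 1" by (simp add: nn_normal)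
  finally show ?thesis .
qed

lemma gauss_coord_finite:
  fixes mu :: "'a::euclidean_space"
  assumes b0: "b0 \<in> Basis"
  shows "(\<integral>\<^sup>+y. ennreal (norm (gauss_density mu y * (y \<bullet> b0))) \<partial>lborel) < \<infinity>"
proof -
  define f where "f b x = ennreal (normal_density (mu \<bullet> b) 1 x * (if b = b0 then \<bar>x\<bar> else 1))" for b x
  have "\<And>y. ennreal (norm (gauss_density mu y * (y \<bullet> b0))) = (\<Prod>b\<in>Basis. f b (y \<bullet> b))"
  proof -
    fix y :: 'a
    have "(\<Prod>b\<in>Basis. f b (y \<bullet> b)) = ennreal (\<Prod>b\<in>Basis. normal_density (mu \<bullet> b) 1 (y \<bullet> b) * (if b = b0 then \<bar>y \<bullet> b\<bar> else 1))"
      unfolding f_def by (rule prod_ennreal) simp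
    also have "(\<Prod>b\<in>Basis. normal_density (mu \<bullet> b) 1 (y \<bullet> b) * (if b = b0 then \<bar>y \<bullet> b\<bar> else 1))
       = gauss_density mu y * (\<Prod>b\<in>Basis. (if b = b0 then \<bar>y \<bullet> b\<bar> else 1))"
      by (simp add: prod.distrib gauss_prod)
    also have "(\<Prod>b\<in>Basis. (if b = b0 then \<bar>y \<bullet> b\<bar> else 1)) = \<bar>y \<bullet> b0\<bar>"
      using b0 by (simp add: prod.delta)
    finally show "ennreal (norm (gauss_density mu y * (y \<bullet> b0))) = (\<Prod>b\<in>Basis. f b (y \<bullet> b))"
      using gauss_nonneg[of mu y] by (simp add: abs_mult)
  qed
  then have "(\<integral>\<^sup>+y. ennreal (norm (gauss_density mu y * (y \<bullet> b0))) \<partial>lborel)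
     = (\<integral>\<^sup>+y. (\<Prod>b\<in>Basis. f b (y \<bullet> b)) \<partial>lborel)" by simp
  also have "\<dots> = (\<Prod>b\<in>Basis. (\<integral>\<^sup>+x. f b x \<partial>lborel))"
    by (rule nn_integral_lborel_prod) (auto simp: f_def)
  also have "\<dots> < \<infinity>"
  proof -
    have "\<forall>b\<in>Basis. (\<integral>\<^sup>+x. f b x \<partial>lborel) \<noteq> top"
    proof
      fix b :: 'a assume "b \<in> Basis"
      show "(\<integral>\<^sup>+x. f b x \<partial>lborel) \<noteq> top"
        using nn_normal_abs[of "mu \<bullet> b0"]
        by (cases "b = b0") (simp_all add: f_def nn_normal less_top)
    qed
    then have "(\<Prod>b\<in>Basis. (\<integral>\<^sup>+x. f b x \<partial>lborel)) \<noteq> top"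
      by (simp add: ennreal_prod_eq_top)
    then show ?thesis by (simp add: less_top)
  qed
  finally show ?thesis .
qed

lemma gauss_coord_int:
  fixes mu :: "'a::euclidean_space"
  assumes "b0 \<in> Basis"
  shows "integrable lborel (\<lambda>y. gauss_density mu y * (y \<bullet> b0))"
  using gauss_coord_finite[OF assms] by (simp add: integrable_iff_bounded)

lemma half_split:
  assumes "0 \<le> a" "0 \<le> b"
  shows "ennreal (1/2*a + 1/2*b) = ennreal (1/2) * ennreal a + ennreal (1/2) * ennreal b"
proof -
  have "ennreal (1/2*a + 1/2*b) = ennreal (1/2*a) + ennreal (1/2*b)"
    by (rule ennreal_plus) (use assms in auto)
  also have "ennreal (1/2*a) = ennreal (1/2) * ennreal a" by (rule ennreal_mult) (use assms in auto)
  also have "ennreal (1/2*b) = ennreal (1/2) * ennreal b" by (rule ennreal_mult) (use assms in auto)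
  finally show ?thesis .
qed

lemma mix_prob: "prob_space (mix_measure theta)"
proof
  have "emeasure (mix_measure theta) (space (mix_measure theta))
     = (\<integral>\<^sup>+y. ennreal (mixd theta y) \<partial>lborel)"
    unfolding mix_eq by (simp add: emeasure_density)
  also have "\<dots> = (\<integral>\<^sup>+y. ennreal (1/2) * ennreal (gauss_density (-theta) y) + ennreal (1/2) * ennreal (gauss_density theta y) \<partial>lborel)"
    unfolding mixd_def using gauss_nonneg
    by (intro nn_integral_cong) (rule half_split; simp add: gauss_nonneg)
  also have "\<dots> = ennreal (1/2) * (\<integral>\<^sup>+y. ennreal (gauss_density (-theta) y) \<partial>lborel) + ennreal (1/2) * (\<integral>\<^sup>+y. ennreal (gauss_density theta y) \<partial>lborel)"
    by (simp add: nn_integral_add nn_integral_cmult)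
  also have "\<dots> = 1" unfolding nn_gauss mult_1_right by (subst ennreal_plus[symmetric]) auto
  finally show "emeasure (mix_measure theta) (space (mix_measure theta)) = 1" .
qed

lemma mix_coord_int:
  assumes "b0 \<in> Basis"
  shows "integrable (mix_measure theta) (\<lambda>y. y \<bullet> b0)"
proof -
  have "integrable lborel (\<lambda>y. mixd theta y *\<^sub>R (y \<bullet> b0))"
    unfolding mixd_def using gauss_coord_int[OF assms, of theta] gauss_coord_int[OF assms, of "-theta"]
    by (simp add: distrib_right)
  then show ?thesis unfolding mix_eq by (subst integrable_density) (auto simp: mixd_nonneg)
qed

lemma mix_id_int: "integrable (mix_measure theta) (\<lambda>y. y)"
proof -
  have "integrable (mix_measure theta) (\<lambda>y. \<Sum>b\<in>Basis. (y \<bullet> b) *\<^sub>R b)"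
    apply (rule Bochner_Integration.integrable_sum[where f="\<lambda>b y. (y \<bullet> b) *\<^sub>R b"])
    apply (rule integrable_scaleR_left)
    apply (erule mix_coord_int)
    done
  then show ?thesis by (simp add: euclidean_representation)
qed

lemma meas_mix: "f \<in> borel_measurable borel \<Longrightarrow> f \<in> borel_measurable (mix_measure theta)"
  unfolding mix_measure_def by simp

lemma wd_bounds: "0 \<le> wd z b" "wd z b \<le> 1"
proof -
  have "exp (inner z b) + exp (- inner z b) > 0" by (simp add: add_pos_pos)
  then show "0 \<le> wd z b" "wd z b \<le> 1" unfolding wd_def by (simp_all add: field_simps)
qed

lemma wd_int: "integrable (mix_measure theta) (\<lambda>y. wd (y - a) b)"
  by (rule finite_measure.integrable_const_bound[where B=1])
     (auto simp: mix_prob prob_space.finite_measure wd_bounds meas_mix)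

lemma wdy_int: "integrable (mix_measure theta) (\<lambda>y. wd (y - a) b *\<^sub>R y)"
  by (rule Bochner_Integration.integrable_bound[OF mix_id_int])
     (auto simp: meas_mix wd_bounds intro!: mult_left_le_one_le)

lemma int_y0: "(\<integral>y. y \<partial>mix_measure theta) = (0::'a::euclidean_space)"
proof -
  have "(\<integral>y. - y \<partial>mix_measure theta) = (\<integral>y. y \<partial>mix_measure theta)"
    using mix_sym[of "\<lambda>y. y" theta] by simp
  then have h: "- (\<integral>y. y \<partial>mix_measure theta) = (\<integral>y. y \<partial>mix_measure theta)" by simp
  have "(\<integral>y. y \<partial>mix_measure theta) + (\<integral>y. y \<partial>mix_measure theta) = 0"
    by (metis h add.right_inverse)
  then have "(2::real) *\<^sub>R (\<integral>y. y \<partial>mix_measure theta) = 0" by (simp add: scaleR_2)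
  then show ?thesis by simp
qed

definition PP :: "'a::euclidean_space \<Rightarrow> 'a \<Rightarrow> 'a \<Rightarrow> real" where
  "PP theta a b = (\<integral>y. wd (y - a) b \<partial>mix_measure theta)"
definition QQ :: "'a::euclidean_space \<Rightarrow> 'a \<Rightarrow> 'a \<Rightarrow> 'a" where
  "QQ theta a b = (\<integral>y. wd (y - a) b *\<^sub>R y \<partial>mix_measure theta)"

lemma meas1: "measure (mix_measure theta) (space (mix_measure theta)) = 1"
  by (rule prob_space.prob_space[OF mix_prob])

lemma int_one: "(\<integral>y. 1 \<partial>mix_measure theta) = (1::real)"
  by (simp add: meas1)

lemma P_neg_a: "PP theta (-a) b = 1 - PP theta a b"
proof -
  have "PP theta (-a) b = (\<integral>y. wd ((-y) + a) b \<partial>mix_measure theta)"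
    unfolding PP_def using mix_sym[of "\<lambda>y. wd (y + a) b" theta] by (simp add: wd_def)
  also have "\<dots> = (\<integral>y. 1 - wd (y - a) b \<partial>mix_measure theta)"
    using wd_neg1[of "y - a" b for y] by (simp add: wd_neg1[symmetric])
  also have "\<dots> = 1 - PP theta a b"
    unfolding PP_def by (subst Bochner_Integration.integral_diff) (auto simp: wd_int int_one meas1 finite_measure.integrable_const[OF prob_space.finite_measure[OF mix_prob]])
  finally show ?thesis .
qed

lemma Q_neg_a: "QQ theta (-a) b = QQ theta a b"
proof -
  have "QQ theta (-a) b = (\<integral>y. wd ((-y) + a) b *\<^sub>R (-y) \<partial>mix_measure theta)"
    unfolding QQ_def using mix_sym[of "\<lambda>y. wd (y + a) b *\<^sub>R y" theta] by (simp add: wd_def)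
  also have "\<dots> = (\<integral>y. wd (y - a) b *\<^sub>R y - y \<partial>mix_measure theta)"
  proof (rule Bochner_Integration.integral_cong[OF refl])
    fix y :: 'a
    have h: "wd (a - y) b = 1 - wd (y - a) b" using wd_neg1[of "y - a" b] by simp
    show "wd ((-y) + a) b *\<^sub>R (-y) = wd (y - a) b *\<^sub>R y - y"
      by (simp add: h scaleR_diff_left)
  qed
  also have "\<dots> = QQ theta a b"
    unfolding QQ_def by (subst Bochner_Integration.integral_diff) (auto simp: wdy_int mix_id_int int_y0)
  finally show ?thesis .
qed

lemma P_neg_b: "PP theta a (-b) = 1 - PP theta a b"
  unfolding PP_def wd_neg2 by (subst Bochner_Integration.integral_diff) (auto simp: wd_int int_one meas1 finite_measure.integrable_const[OF prob_space.finite_measure[OF mix_prob]])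

lemma Q_neg_b: "QQ theta a (-b) = - QQ theta a b"
proof -
  have "QQ theta a (-b) = (\<integral>y. y - wd (y - a) b *\<^sub>R y \<partial>mix_measure theta)"
    unfolding QQ_def wd_neg2 by (simp add: algebra_simps)
  also have "\<dots> = - QQ theta a b"
    unfolding QQ_def by (subst Bochner_Integration.integral_diff) (auto simp: wdy_int mix_id_int int_y0)
  finally show ?thesis .
qed

lemma step_eq: "em_step theta (a, b) =
   (((1 - 2 * PP theta a b) / (2 * PP theta a b * (1 - PP theta a b))) *\<^sub>R QQ theta a b,
    (1 / (2 * PP theta a b * (1 - PP theta a b))) *\<^sub>R QQ theta a b)"
  unfolding em_step_def PP_def QQ_def Let_def by simp

lemma step_neg_a: "em_step theta (-a, b) = (- fst (em_step theta (a, b)), snd (em_step theta (a, b)))"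
proof -
  have h: "(2 * PP theta a b - 1) / (PP theta a b * (2 - 2 * PP theta a b))
        = - ((1 - 2 * PP theta a b) / ((1 - PP theta a b) * (2 * PP theta a b)))"
  proof -
    have "PP theta a b * (2 - 2 * PP theta a b) = (1 - PP theta a b) * (2 * PP theta a b)"
      by (simp add: algebra_simps)
    moreover have "2 * PP theta a b - 1 = - (1 - 2 * PP theta a b)" by simp
    ultimately show ?thesis by (simp only: minus_divide_left)
  qed
  show ?thesis unfolding step_eq P_neg_a Q_neg_a
    by (simp add: mult.commute h)
qed

lemma step_neg_b: "em_step theta (a, -b) = (fst (em_step theta (a, b)), - snd (em_step theta (a, b)))"
proof -
  have h: "(2 * PP theta a b - 1) / (PP theta a b * (2 - 2 * PP theta a b))
        = - ((1 - 2 * PP theta a b) / ((1 - PP theta a b) * (2 * PP theta a b)))"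
  proof -
    have "PP theta a b * (2 - 2 * PP theta a b) = (1 - PP theta a b) * (2 * PP theta a b)"
      by (simp add: algebra_simps)
    moreover have "2 * PP theta a b - 1 = - (1 - 2 * PP theta a b)" by simp
    ultimately show ?thesis by (simp only: minus_divide_left)
  qed
  show ?thesis unfolding step_eq P_neg_b Q_neg_b
    by (simp add: mult.commute h)
qed

lemma iter_neg_a: "em_iter theta (-a) b t = (- fst (em_iter theta a b t), snd (em_iter theta a b t))"
proof (induction t)
  case 0 then show ?case by (simp add: em_iter_def)
next
  case (Suc t)
  have "em_iter theta (-a) b (Suc t) = em_step theta (em_iter theta (-a) b t)"
    by (simp add: em_iter_def)
  also have "\<dots> = em_step theta (- fst (em_iter theta a b t), snd (em_iter theta a b t))"
    using Suc by simp
  also have "\<dots> = (- fst (em_step theta (em_iter theta a b t)), snd (em_step theta (em_iter theta a b t)))"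
    by (simp add: step_neg_a)
  finally show ?case by (simp add: em_iter_def)
qed

lemma iter_neg_b: "em_iter theta a (-b) t = (fst (em_iter theta a b t), - snd (em_iter theta a b t))"
proof (induction t)
  case 0 then show ?case by (simp add: em_iter_def)
next
  case (Suc t)
  have "em_iter theta a (-b) (Suc t) = em_step theta (em_iter theta a (-b) t)"
    by (simp add: em_iter_def)
  also have "\<dots> = em_step theta (fst (em_iter theta a b t), - snd (em_iter theta a b t))"
    using Suc by simp
  also have "\<dots> = (fst (em_step theta (em_iter theta a b t)), - snd (em_step theta (em_iter theta a b t)))"
    by (simp add: step_neg_b)
  finally show ?case by (simp add: em_iter_def)
qed

theorem lemma5:
  fixes theta a01 b01 a02 b02 :: "'a::euclidean_space"
  shows "(a01 = - a02 \<and> b01 = b02 \<longrightarrow>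
            (\<forall>t. fst (em_iter theta a01 b01 t) = - fst (em_iter theta a02 b02 t) \<and>
                 snd (em_iter theta a01 b01 t) = snd (em_iter theta a02 b02 t)))
       \<and> (b01 = - b02 \<and> a01 = a02 \<longrightarrow>
            (\<forall>t. fst (em_iter theta a01 b01 t) = fst (em_iter theta a02 b02 t) \<and>
                 snd (em_iter theta a01 b01 t) = - snd (em_iter theta a02 b02 t)))"
  by (auto simp: iter_neg_a iter_neg_b)

end
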